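(* Let $d\ge2$ and, for $\ell\ge0$, let $P_\ell:[-1,1]\to\mathbb R$ be the Legendre polynomial of degree $\ell$ in dimension $d$, normalized by $P_\ell(1)=1$. Let $\lambda_\ell=\ell(d+\ell-2)$. Then for all $x\in[-1,1]$ and all integers $\ell\ge1$, \[ 1-P_{2\ell}(x)\le\frac{\lambda_{2\ell}}{\lambda_2}\big(1-P_2(x)\big). \]
   Context: The Legendre polynomial $P_\ell$ in dimension $d$ is the polynomial such that $\sigma\mapsto P_\ell(e_1\cdot\sigma)$ is the unique spherical harmonic of degree $\ell$ on $S^{d-1}$ (restriction of an $\ell$-homogeneous harmonic polynomial on $\mathbb R^d$) invariant under rotations fixing $e_1$ with value $1$ at $e_1$; for $d=2$, $P_\ell(\cos\theta)=\cos(\ell\theta)$. Then $-\Delta_{S^{d-1}}Y=\lambda_\ell Y$ for $Y(\sigma)=P_\ell(e_1\cdot\sigma)$. *)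

theory Defs
  imports "HOL-Analysis.Analysis" "HOL-Computational_Algebra.Polynomial"
begin

definition poly_fun :: "(real^'n::finite \<Rightarrow> real) \<Rightarrow> bool" where
  "poly_fun H \<longleftrightarrow> (\<exists>c :: ('n \<Rightarrow> nat) \<Rightarrow> real. finite {\<alpha>. c \<alpha> \<noteq> 0} \<and>
     (\<forall>x. H x = (\<Sum>\<alpha>\<in>{\<alpha>. c \<alpha> \<noteq> 0}. c \<alpha> * (\<Prod>i\<in>UNIV. (x $ i) ^ (\<alpha> i)))))"

definition homogeneous_of_degree :: "nat \<Rightarrow> (real^'n \<Rightarrow> real) \<Rightarrow> bool" where
  "homogeneous_of_degree l H \<longleftrightarrow> (\<forall>t x. H (t *\<^sub>R x) = t ^ l * H x)"

definition laplacian :: "(real^'n::finite \<Rightarrow> real) \<Rightarrow> real^'n \<Rightarrow> real" where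
  "laplacian H x = (\<Sum>i\<in>UNIV. deriv (\<lambda>s. deriv (\<lambda>t. H (x + t *\<^sub>R axis i 1)) s) 0)"

definition harmonic :: "(real^'n::finite \<Rightarrow> real) \<Rightarrow> bool" where
  "harmonic H \<longleftrightarrow> (\<forall>x. laplacian H x = 0)"

text \<open>The distinguished first coordinate index e_1 (any fixed index).\<close>
definition first_index :: "'n itself \<Rightarrow> 'n" where
  "first_index _ = (SOME i. True)"

definition legendre_poly :: "'n::finite itself \<Rightarrow> nat \<Rightarrow> real poly" where
  "legendre_poly T l = (THE p. poly p 1 = 1 \<and>
     (\<exists>H :: real^'n \<Rightarrow> real. poly_fun H \<and> homogeneous_of_degree l H \<and> harmonic H \<and>
        (\<forall>\<sigma>. norm \<sigma> = 1 \<longrightarrow> H \<sigma> = poly p (\<sigma> $ first_index T))))"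

definition legendre :: "'n::finite itself \<Rightarrow> nat \<Rightarrow> real \<Rightarrow> real" where
  "legendre T l x = poly (legendre_poly T l) x"

definition sph_eigenvalue :: "nat \<Rightarrow> nat \<Rightarrow> real" where
  "sph_eigenvalue d l = real l * (real d + real l - 2)"

end

theory Submission
  imports Defs
begin

definition mono_fun :: "('n::finite \<Rightarrow> nat) \<Rightarrow> real^'n \<Rightarrow> real" where
  "mono_fun \<alpha> x = (\<Prod>i\<in>UNIV. (x $ i) ^ (\<alpha> i))"

lemma poly_funI:
  fixes H :: "real^'n::finite \<Rightarrow> real"
  assumes fin: "finite I" and H: "\<And>x. H x = (\<Sum>i\<in>I. a i * mono_fun (f i) x)"
  shows "poly_fun H"
proof -
  define c where "c \<gamma> = (\<Sum>i\<in>{i\<in>I. f i = \<gamma>}. a i)" for \<gamma>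
  have sub: "{\<gamma>. c \<gamma> \<noteq> 0} \<subseteq> f ` I"
  proof
    fix \<gamma> assume "\<gamma> \<in> {\<gamma>. c \<gamma> \<noteq> 0}"
    then have "{i\<in>I. f i = \<gamma>} \<noteq> {}" unfolding c_def by (intro notI) simp
    then show "\<gamma> \<in> f ` I" by blast
  qed
  have finS: "finite {\<gamma>. c \<gamma> \<noteq> 0}" using sub fin finite_subset by blast
  have "H x = (\<Sum>\<gamma>\<in>{\<gamma>. c \<gamma> \<noteq> 0}. c \<gamma> * mono_fun \<gamma> x)" for x
  proof -
    have "H x = (\<Sum>\<gamma>\<in>f ` I. (\<Sum>i\<in>{i\<in>I. f i = \<gamma>}. a i * mono_fun (f i) x))"
      using H sum.group[OF fin finite_imageI[OF fin], where g=f and h="\<lambda>i. a i * mono_fun (f i) x"] by simp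
    also have "\<dots> = (\<Sum>\<gamma>\<in>f ` I. c \<gamma> * mono_fun \<gamma> x)"
      unfolding c_def sum_distrib_right by (intro sum.cong refl) auto
    also have "\<dots> = (\<Sum>\<gamma>\<in>{\<gamma>. c \<gamma> \<noteq> 0}. c \<gamma> * mono_fun \<gamma> x)"
      by (rule sum.mono_neutral_right[OF finite_imageI[OF fin] sub]) auto
    finally show ?thesis .
  qed
  then show ?thesis unfolding poly_fun_def mono_fun_def using finS by blast
qed

lemma poly_funE:
  fixes H :: "real^'a::finite \<Rightarrow> real"
  assumes "poly_fun H"
  shows "\<exists>S c. finite S \<and> (\<forall>x. H x = (\<Sum>\<alpha>\<in>S. c \<alpha> * mono_fun \<alpha> x))"
proof -
  from assms obtain c :: "('a \<Rightarrow> nat) \<Rightarrow> real" where "finite {\<alpha>. c \<alpha> \<noteq> 0}"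
    "\<forall>x. H x = (\<Sum>\<alpha>\<in>{\<alpha>. c \<alpha> \<noteq> 0}. c \<alpha> * (\<Prod>i\<in>UNIV. (x $ i) ^ (\<alpha> i)))"
    unfolding poly_fun_def by blast
  then show ?thesis unfolding mono_fun_def by blast
qed

lemma poly_fun_const: "poly_fun (\<lambda>x::real^'n::finite. a)"
  by (rule poly_funI[where I="{()}" and a="\<lambda>_. a" and f="\<lambda>_ _. 0"]) (auto simp: mono_fun_def)

lemma poly_fun_coord: "poly_fun (\<lambda>x::real^'n::finite. x $ j)"
proof (rule poly_funI[where I="{()}" and a="\<lambda>_. 1" and f="\<lambda>_ i. if i = j then 1 else 0"])
  fix x :: "real^'n"
  have "(\<Prod>i\<in>UNIV. (x $ i) ^ (if i = j then 1 else 0)) = (\<Prod>i\<in>UNIV. if i = j then x $ i else 1)"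
    by (intro prod.cong) auto
  also have "\<dots> = x $ j" by (simp add: prod.delta)
  finally show "x $ j = (\<Sum>i\<in>{()}. 1 * mono_fun (\<lambda>i. if i = j then 1 else 0) x)"
    by (simp add: mono_fun_def)
qed simp

lemma poly_fun_add:
  assumes "poly_fun F" "poly_fun G"
  shows "poly_fun (\<lambda>x. F x + G x)"
proof -
  obtain S c where S: "finite S" "\<forall>x. F x = (\<Sum>\<alpha>\<in>S. c \<alpha> * mono_fun \<alpha> x)"
    using poly_funE[OF assms(1)] by blast
  obtain T e where T: "finite T" "\<forall>x. G x = (\<Sum>\<alpha>\<in>T. e \<alpha> * mono_fun \<alpha> x)"
    using poly_funE[OF assms(2)] by blast
  show ?thesis
  proof (rule poly_funI[where I="S \<union> T" and a="\<lambda>\<alpha>. (if \<alpha> \<in> S then c \<alpha> else 0) + (if \<alpha> \<in> T then e \<alpha> else 0)"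
        and f="\<lambda>\<alpha>. \<alpha>"])
    show "finite (S \<union> T)" using S T by auto
    fix x
    have fin: "finite (S \<union> T)" using S T by auto
    have 1: "(\<Sum>\<alpha>\<in>S \<union> T. (if \<alpha> \<in> S then c \<alpha> * mono_fun \<alpha> x else 0)) = F x"
    proof -
      have "(\<Sum>\<alpha>\<in>S \<union> T. (if \<alpha> \<in> S then c \<alpha> * mono_fun \<alpha> x else 0)) = sum (\<lambda>\<alpha>. c \<alpha> * mono_fun \<alpha> x) ((S \<union> T) \<inter> S)"
        by (rule sum.inter_restrict[OF fin, symmetric])
      also have "(S \<union> T) \<inter> S = S" by blast
      also have "sum (\<lambda>\<alpha>. c \<alpha> * mono_fun \<alpha> x) S = F x" using S(2) by simp
      finally show ?thesis .
    qed
    have 2: "(\<Sum>\<alpha>\<in>S \<union> T. (if \<alpha> \<in> T then e \<alpha> * mono_fun \<alpha> x else 0)) = G x"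
    proof -
      have "(\<Sum>\<alpha>\<in>S \<union> T. (if \<alpha> \<in> T then e \<alpha> * mono_fun \<alpha> x else 0)) = sum (\<lambda>\<alpha>. e \<alpha> * mono_fun \<alpha> x) ((S \<union> T) \<inter> T)"
        by (rule sum.inter_restrict[OF fin, symmetric])
      also have "(S \<union> T) \<inter> T = T" by blast
      also have "sum (\<lambda>\<alpha>. e \<alpha> * mono_fun \<alpha> x) T = G x" using T(2) by simp
      finally show ?thesis .
    qed
    have "(\<Sum>\<alpha>\<in>S \<union> T. ((if \<alpha> \<in> S then c \<alpha> else 0) + (if \<alpha> \<in> T then e \<alpha> else 0)) * mono_fun \<alpha> x)
       = (\<Sum>\<alpha>\<in>S \<union> T. (if \<alpha> \<in> S then c \<alpha> * mono_fun \<alpha> x else 0)) + (\<Sum>\<alpha>\<in>S \<union> T. (if \<alpha> \<in> T then e \<alpha> * mono_fun \<alpha> x else 0))"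
      unfolding sum.distrib[symmetric] by (intro sum.cong refl) (simp add: distrib_right)
    also have "\<dots> = F x + G x" using 1 2 by (rule arg_cong2[where f="(+)"])
    finally show "F x + G x = (\<Sum>\<alpha>\<in>S \<union> T. ((if \<alpha> \<in> S then c \<alpha> else 0) + (if \<alpha> \<in> T then e \<alpha> else 0)) * mono_fun \<alpha> x)"
      by (rule sym)
  qed
qed

lemma mono_fun_add: "mono_fun (\<lambda>i. \<alpha> i + \<beta> i) x = mono_fun \<alpha> x * mono_fun \<beta> x"
  by (simp add: mono_fun_def power_add prod.distrib)

lemma poly_fun_mult:
  assumes "poly_fun F" "poly_fun G"
  shows "poly_fun (\<lambda>x. F x * G x)"
proof -
  obtain S c where S: "finite S" "\<forall>x. F x = (\<Sum>\<alpha>\<in>S. c \<alpha> * mono_fun \<alpha> x)"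
    using poly_funE[OF assms(1)] by blast
  obtain T e where T: "finite T" "\<forall>x. G x = (\<Sum>\<alpha>\<in>T. e \<alpha> * mono_fun \<alpha> x)"
    using poly_funE[OF assms(2)] by blast
  show ?thesis
  proof (rule poly_funI[where I="S \<times> T" and a="\<lambda>(\<alpha>,\<beta>). c \<alpha> * e \<beta>" and f="\<lambda>(\<alpha>,\<beta>) i. \<alpha> i + \<beta> i"])
    show "finite (S \<times> T)" using S T by auto
    fix x
    show "F x * G x = (\<Sum>i\<in>S \<times> T. (case i of (\<alpha>, \<beta>) \<Rightarrow> c \<alpha> * e \<beta>) * mono_fun (case i of (\<alpha>, \<beta>) \<Rightarrow> \<lambda>i. \<alpha> i + \<beta> i) x)"
      by (simp add: S(2) T(2) sum_product sum.cartesian_product mono_fun_add case_prod_beta algebra_simps)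
  qed
qed

lemma poly_fun_pow: "poly_fun F \<Longrightarrow> poly_fun (\<lambda>x. F x ^ n)"
  by (induction n) (auto intro: poly_fun_const poly_fun_mult)

lemma poly_fun_sum: "finite A \<Longrightarrow> (\<And>k. k \<in> A \<Longrightarrow> poly_fun (F k)) \<Longrightarrow> poly_fun (\<lambda>x. \<Sum>k\<in>A. F k x)"
  by (induction A rule: finite_induct) (auto intro: poly_fun_const poly_fun_add)

lemma poly_fun_line:
  assumes "poly_fun H"
  shows "\<exists>q. \<forall>t. H (x + t *\<^sub>R v) = poly q t"
proof -
  obtain S c where S: "finite S" "\<forall>x. H x = (\<Sum>\<alpha>\<in>S. c \<alpha> * mono_fun \<alpha> x)"
    using poly_funE[OF assms] by blast
  have "H (x + t *\<^sub>R v) = poly (\<Sum>\<alpha>\<in>S. smult (c \<alpha>) (\<Prod>i\<in>UNIV. [:x $ i, v $ i:] ^ (\<alpha> i))) t" for t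
    by (simp add: S(2) poly_sum poly_prod mono_fun_def poly_power)
  then show ?thesis by blast
qed


lemma deriv2_at0:
  fixes g g1 g2 :: "real \<Rightarrow> real"
  assumes "\<And>s. (g has_real_derivative g1 s) (at s)" "\<And>s. (g1 has_real_derivative g2 s) (at s)"
  shows "deriv (\<lambda>s. deriv g s) 0 = g2 0"
proof -
  have "deriv g = g1" using assms(1) DERIV_imp_deriv by blast
  then show ?thesis using DERIV_imp_deriv[OF assms(2)] by simp
qed

definition rho :: "real^'n::finite \<Rightarrow> real" where
  "rho x = (\<Sum>i\<in>UNIV - {first_index TYPE('n)}. (x $ i)^2)"

definition He :: "(nat \<Rightarrow> real) \<Rightarrow> nat \<Rightarrow> real^'n::finite \<Rightarrow> real" where
  "He e l x = (\<Sum>k\<le>l. e k * ((x $ first_index TYPE('n))^2)^k * rho x ^ (l-k))"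

lemma rho_line:
  fixes x :: "real^'n::finite"
  shows "rho (x + t *\<^sub>R axis i 1) = rho x + (if i = first_index TYPE('n) then 0 else 2 * t * x $ i + t^2)"
proof -
  let ?U = "UNIV - {first_index TYPE('n)}"
  have "rho (x + t *\<^sub>R axis i 1) = (\<Sum>j\<in>?U. (x $ j)^2 + (if j = i then 2 * t * x $ i + t^2 else 0))"
    unfolding rho_def by (intro sum.cong refl) (auto simp: axis_def power2_eq_square algebra_simps)
  also have "\<dots> = rho x + (\<Sum>j\<in>?U. (if j = i then 2 * t * x $ i + t^2 else 0))"
    by (simp add: sum.distrib rho_def)
  also have "(\<Sum>j\<in>?U. (if j = i then 2 * t * x $ i + t^2 else 0)) = (if i = first_index TYPE('n) then 0 else 2 * t * x $ i + t^2)"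
    by (auto simp: sum.delta)
  finally show ?thesis .
qed

lemma first_line:
  fixes x :: "real^'n::finite"
  shows "(x + t *\<^sub>R axis i 1) $ first_index TYPE('n) = x $ first_index TYPE('n) + (if i = first_index TYPE('n) then t else 0)"
  by (auto simp: axis_def)

lemma rho_sum: "(\<Sum>i\<in>UNIV - {first_index TYPE('n)}. ((x::real^'n::finite) $ i)^2) = rho x"
  by (simp add: rho_def)

lemma lap_dir_first:
  fixes x :: "real^'n::finite"
  defines "i1 \<equiv> first_index TYPE('n)"
  shows "deriv (\<lambda>s. deriv (\<lambda>t. He e l (x + t *\<^sub>R axis i1 1)) s) 0
     = (\<Sum>k\<le>l. e k * (2*k*(2*k-1)) * ((x $ i1)^2)^(k-1) * rho x ^ (l-k))"
proof -
  have eq: "He e l (x + t *\<^sub>R axis i1 1) = (\<Sum>k\<le>l. e k * (x $ i1 + t)^(2*k) * rho x ^ (l-k))" for t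
    unfolding He_def i1_def by (simp add: rho_line first_line power_mult)
  let ?g1 = "\<lambda>t. (\<Sum>k\<le>l. e k * (real (2*k) * (x $ i1 + t)^(2*k-1)) * rho x ^ (l-k))"
  let ?g2 = "\<lambda>t. (\<Sum>k\<le>l. e k * (real (2*k) * (real (2*k-1) * (x $ i1 + t)^(2*k-1-1))) * rho x ^ (l-k))"
  have d1: "((\<lambda>t. He e l (x + t *\<^sub>R axis i1 1)) has_real_derivative ?g1 s) (at s)" for s
    unfolding eq by (auto intro!: derivative_eq_intros sum.cong simp: mult_ac)
  have d2: "(?g1 has_real_derivative ?g2 s) (at s)" for s
    by (auto intro!: derivative_eq_intros sum.cong simp: mult_ac)
  have "deriv (\<lambda>s. deriv (\<lambda>t. He e l (x + t *\<^sub>R axis i1 1)) s) 0 = ?g2 0"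
    by (rule deriv2_at0[OF d1 d2])
  also have "\<dots> = (\<Sum>k\<le>l. e k * (2*k*(2*k-1)) * ((x $ i1)^2)^(k-1) * rho x ^ (l-k))"
  proof (intro sum.cong refl)
    fix k
    show "e k * (real (2*k) * (real (2*k-1) * (x $ i1 + 0)^(2*k-1-1))) * rho x ^ (l-k)
      = e k * (2*k*(2*k-1)) * ((x $ i1)^2)^(k-1) * rho x ^ (l-k)"
    proof (cases k)
      case 0 then show ?thesis by simp
    next
      case (Suc k') 
      have a: "2*k-1-1 = 2*k'" "real (2*k-1) = 2 * real k' + 1" "k - 1 = k'" using Suc by auto
      have b: "(x $ i1 + 0)^(2*k') = ((x $ i1)^2)^k'" by (simp add: power_mult)
      show ?thesis unfolding a b using Suc by (simp add: algebra_simps)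
    qed
  qed
  finally show ?thesis .
qed

lemma lap_dir_other:
  fixes x :: "real^'n::finite"
  assumes "i \<noteq> first_index TYPE('n)"
  shows "deriv (\<lambda>s. deriv (\<lambda>t. He e l (x + t *\<^sub>R axis i 1)) s) 0
     = (\<Sum>k\<le>l. e k * ((x $ first_index TYPE('n))^2)^k *
          (real (l-k) * (real (l-k-1) * rho x ^ (l-k-1-1) * (2 * x $ i)^2 + rho x ^ (l-k-1) * 2)))"
proof -
  let ?s = "(x $ first_index TYPE('n))^2"
  have eq: "He e l (x + t *\<^sub>R axis i 1) = (\<Sum>k\<le>l. e k * ?s^k * (rho x + 2 * t * x $ i + t^2) ^ (l-k))" for t
    unfolding He_def rho_line using assms by (simp add: axis_def add.assoc)
  let ?g1 = "\<lambda>t. (\<Sum>k\<le>l. e k * ?s^k * (real (l-k) * (rho x + 2 * t * x $ i + t^2) ^ (l-k-1) * (2 * x $ i + 2 * t)))"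
  let ?g2 = "\<lambda>t. (\<Sum>k\<le>l. e k * ?s^k * (real (l-k) * (real (l-k-1) * (rho x + 2 * t * x $ i + t^2) ^ (l-k-1-1) * (2 * x $ i + 2 * t)) * (2 * x $ i + 2 * t)
          + real (l-k) * (rho x + 2 * t * x $ i + t^2) ^ (l-k-1) * 2))"
  have d1: "((\<lambda>t. He e l (x + t *\<^sub>R axis i 1)) has_real_derivative ?g1 s) (at s)" for s
    unfolding eq by (auto intro!: derivative_eq_intros sum.cong simp: algebra_simps)
  have d2: "(?g1 has_real_derivative ?g2 s) (at s)" for s
    by (auto intro!: derivative_eq_intros sum.cong simp: algebra_simps)
  have "deriv (\<lambda>s. deriv (\<lambda>t. He e l (x + t *\<^sub>R axis i 1)) s) 0 = ?g2 0"
    by (rule deriv2_at0[OF d1 d2])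
  also have "\<dots> = (\<Sum>k\<le>l. e k * ?s^k *
          (real (l-k) * (real (l-k-1) * rho x ^ (l-k-1-1) * (2 * x $ i)^2 + rho x ^ (l-k-1) * 2)))"
    by (intro sum.cong refl) (simp add: algebra_simps power2_eq_square)
  finally show ?thesis .
qed


lemma m_identity:
  fixes r d :: real
  shows "real m * (real (m-1) * r^(m-1-1) * r * 4 + r^(m-1) * 2 * (d-1)) = 2 * real m * (2*real m + d - 3) * r^(m-1)"
proof (cases m)
  case 0 then show ?thesis by simp
next
  case (Suc m')
  then show ?thesis
  proof (cases m')
    case 0 then show ?thesis using Suc by (simp add: algebra_simps)
  next
    case (Suc m'')
    then have "r^(m-1-1) * r = r^(m-1)" using \<open>m = Suc m'\<close> by simp
    then show ?thesis using \<open>m = Suc m'\<close> Suc by (simp add: algebra_simps of_nat_diff)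
  qed
qed

lemma card_rest: "real (card (UNIV - {first_index TYPE('n::finite)})) = real CARD('n) - 1"
proof -
  have "card (UNIV - {first_index TYPE('n)}) = CARD('n) - 1" by (simp add: card_Diff_singleton)
  moreover have "CARD('n) \<ge> 1" by (simp add: Suc_leI)
  ultimately show ?thesis by (simp add: of_nat_diff)
qed

lemma lap_He:
  fixes x :: "real^'n::finite"
  defines "s \<equiv> (x $ first_index TYPE('n))^2" and "r \<equiv> rho x" and "d \<equiv> real CARD('n)"
  shows "laplacian (He e l) x = (\<Sum>k\<le>l. e k * (2*k*(2*k-1)) * s^(k-1) * r^(l-k))
     + (\<Sum>k\<le>l. e k * s^k * (2 * real (l-k) * (2 * real (l-k) + d - 3)) * r^(l-k-1))"
proof -
  let ?i1 = "first_index TYPE('n)"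
  let ?U = "UNIV - {?i1}"
  let ?D = "\<lambda>i. deriv (\<lambda>s. deriv (\<lambda>t. He e l (x + t *\<^sub>R axis i 1)) s) 0"
  have "laplacian (He e l) x = ?D ?i1 + sum ?D ?U"
    unfolding laplacian_def by (rule sum.remove) auto
  also have "?D ?i1 = (\<Sum>k\<le>l. e k * (2*k*(2*k-1)) * s^(k-1) * r^(l-k))"
    unfolding s_def r_def by (rule lap_dir_first)
  also have "sum ?D ?U = (\<Sum>i\<in>?U. \<Sum>k\<le>l. e k * s^k *
          (real (l-k) * (real (l-k-1) * r ^ (l-k-1-1) * (2 * x $ i)^2 + r ^ (l-k-1) * 2)))"
    unfolding s_def r_def by (intro sum.cong refl lap_dir_other) auto
  also have "\<dots> = (\<Sum>k\<le>l. \<Sum>i\<in>?U. e k * s^k *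
          (real (l-k) * (real (l-k-1) * r ^ (l-k-1-1) * (2 * x $ i)^2 + r ^ (l-k-1) * 2)))"
    by (rule sum.swap)
  also have "\<dots> = (\<Sum>k\<le>l. e k * s^k * (2 * real (l-k) * (2 * real (l-k) + d - 3)) * r^(l-k-1))"
  proof (intro sum.cong refl)
    fix k
    let ?m = "l - k"
    have "(\<Sum>i\<in>?U. e k * s^k * (real ?m * (real (?m-1) * r ^ (?m-1-1) * (2 * x $ i)^2 + r ^ (?m-1) * 2)))
      = e k * s^k * (real ?m * (real (?m-1) * r ^ (?m-1-1) * 4 * (\<Sum>i\<in>?U. (x $ i)^2) + r ^ (?m-1) * 2 * real (card ?U)))"
      by (simp add: sum_distrib_left sum.distrib algebra_simps power_mult_distrib)
    also have "\<dots> = e k * s^k * (real ?m * (real (?m-1) * r ^ (?m-1-1) * r * 4 + r ^ (?m-1) * 2 * (d - 1)))"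
      unfolding rho_sum card_rest r_def d_def by (simp add: algebra_simps)
    also have "\<dots> = e k * s^k * (2 * real ?m * (2 * real ?m + d - 3)) * r^(?m-1)"
      using m_identity[of ?m r d] by simp
    finally show "(\<Sum>i\<in>?U. e k * s^k * (real ?m * (real (?m-1) * r ^ (?m-1-1) * (2 * x $ i)^2 + r ^ (?m-1) * 2)))
      = e k * s^k * (2 * real ?m * (2 * real ?m + d - 3)) * r^(?m-1)" .
  qed
  finally show ?thesis .
qed


definition cf :: "(nat \<Rightarrow> real) \<Rightarrow> real \<Rightarrow> nat \<Rightarrow> nat \<Rightarrow> real" where
  "cf e d l k = e (Suc k) * (2 * real (Suc k) * (2 * real k + 1)) + e k * (2 * real (l-k) * (2 * real (l-k) + d - 3))"

lemma lap_reindex: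
  fixes s r d :: real and e :: "nat \<Rightarrow> real"
  shows "(\<Sum>k\<le>Suc l'. e k * (2*k*(2*k-1)) * s^(k-1) * r^(Suc l'-k))
     + (\<Sum>k\<le>Suc l'. e k * s^k * (2 * real (Suc l'-k) * (2 * real (Suc l'-k) + d - 3)) * r^(Suc l'-k-1))
     = (\<Sum>k\<le>l'. cf e d (Suc l') k * s^k * r^(l'-k))"
proof -
  have 1: "(\<Sum>k\<le>Suc l'. e k * (2*k*(2*k-1)) * s^(k-1) * r^(Suc l'-k))
      = (\<Sum>k\<le>l'. e (Suc k) * (2 * real (Suc k) * (2 * real k + 1)) * s^k * r^(l'-k))"
    by (subst sum.atMost_Suc_shift) (simp add: of_nat_diff algebra_simps)
  have 2: "(\<Sum>k\<le>Suc l'. e k * s^k * (2 * real (Suc l'-k) * (2 * real (Suc l'-k) + d - 3)) * r^(Suc l'-k-1))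
      = (\<Sum>k\<le>l'. e k * (2 * real (Suc l'-k) * (2 * real (Suc l'-k) + d - 3)) * s^k * r^(l'-k))"
    unfolding sum.atMost_Suc[of _ l'] by (simp, intro sum.cong refl, auto simp: Suc_diff_le)
  show ?thesis unfolding 1 2 sum.distrib[symmetric] cf_def by (intro sum.cong refl) (simp add: algebra_simps)
qed

definition fac :: "real \<Rightarrow> nat \<Rightarrow> nat \<Rightarrow> real" where
  "fac d l j = - (real (Suc j) * (2 * real j + 1)) / (real (l-j) * (2 * real (l-j) + d - 3))"

definition EE :: "real \<Rightarrow> nat \<Rightarrow> nat \<Rightarrow> real" where
  "EE d l k = (\<Prod>j\<in>{k..<l}. fac d l j)"

lemma EE_l [simp]: "EE d l l = 1"
  by (simp add: EE_def)

lemma EE_step: "k < l \<Longrightarrow> EE d l k = fac d l k * EE d l (Suc k)"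
  unfolding EE_def by (simp add: prod.atLeast_Suc_lessThan)

lemma denom_pos: "d \<ge> 2 \<Longrightarrow> k < l \<Longrightarrow> real (l-k) * (2 * real (l-k) + d - 3) > 0"
  by (intro mult_pos_pos) (auto simp: of_nat_diff)

lemma cf_EE: "d \<ge> 2 \<Longrightarrow> k < l \<Longrightarrow> cf (EE d l) d l k = 0"
  using denom_pos[of d k l] unfolding cf_def EE_step[of k l d] fac_def
  by (simp add: field_simps)

lemma cf_zero_unique:
  assumes "d \<ge> 2" "\<And>k. k < l \<Longrightarrow> cf e d l k = 0" "e l = 1" "k \<le> l"
  shows "e k = EE d l k"
  using assms(4)
proof (induction rule: inc_induct)
  case base then show ?case using assms(3) by simp
next
  case (step n)
  have "cf e d l n = 0" using assms(2) step by simp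
  then have "e n = fac d l n * e (Suc n)"
    using denom_pos[of d n l] assms(1) step unfolding cf_def fac_def by (simp add: field_simps)
  then show ?case using step EE_step[of n l d] by simp
qed


definition Bp :: "(nat \<Rightarrow> real) \<Rightarrow> nat \<Rightarrow> real poly" where
  "Bp e l = (\<Sum>k\<le>l. smult (e k) ([:0,0,1:]^k * [:1,0,-1:]^(l-k)))"

lemma poly_Bp: "poly (Bp e l) w = (\<Sum>k\<le>l. e k * (w^2)^k * (1 - w^2)^(l-k))"
  by (simp add: Bp_def poly_sum power2_eq_square poly_power mult.assoc)

lemma Bp_at1: "poly (Bp e l) 1 = e l"
proof -
  have "poly (Bp e l) 1 = (\<Sum>k\<le>l. if k = l then e k else 0)"
    unfolding poly_Bp by (intro sum.cong refl) auto
  then show ?thesis by simp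
qed

lemma normsq: "(norm (x::real^'n::finite))^2 = (x $ first_index TYPE('n))^2 + rho x"
proof -
  have "(norm x)^2 = (\<Sum>i\<in>UNIV. (x $ i)^2)"
    unfolding power2_norm_eq_inner inner_vec_def by (simp add: power2_eq_square)
  also have "\<dots> = (x $ first_index TYPE('n))^2 + rho x"
    unfolding rho_def by (rule sum.remove) auto
  finally show ?thesis .
qed

lemma rho_scale: "rho (t *\<^sub>R x) = t^2 * rho x"
  by (simp add: rho_def sum_distrib_left power_mult_distrib)

lemma He_homog: "homogeneous_of_degree (2*l) (He e l)"
  unfolding homogeneous_of_degree_def
proof (intro allI)
  fix t and x :: "real^'a"
  have "He e l (t *\<^sub>R x) = (\<Sum>k\<le>l. (t^2)^k * (t^2)^(l-k) * (e k * ((x $ first_index TYPE('a))^2)^k * rho x ^ (l-k)))"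
    unfolding He_def rho_scale by (intro sum.cong refl) (simp add: power_mult_distrib algebra_simps)
  also have "\<dots> = (\<Sum>k\<le>l. t^(2*l) * (e k * ((x $ first_index TYPE('a))^2)^k * rho x ^ (l-k)))"
    by (intro sum.cong refl) (simp add: power_add[symmetric] power_mult)
  also have "\<dots> = t^(2*l) * He e l x"
    by (simp add: He_def sum_distrib_left)
  finally show "He e l (t *\<^sub>R x) = t^(2*l) * He e l x" .
qed

lemma rho_poly_fun: "poly_fun (rho :: real^'n::finite \<Rightarrow> real)"
proof -
  have "poly_fun (\<lambda>x::real^'n. \<Sum>i\<in>UNIV - {first_index TYPE('n)}. (x $ i)^2)"
    by (intro poly_fun_sum poly_fun_pow poly_fun_coord) auto
  then show ?thesis unfolding rho_def[abs_def] .
qed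

lemma He_poly_fun: "poly_fun (He e l :: real^'n::finite \<Rightarrow> real)"
proof -
  have "poly_fun (\<lambda>x::real^'n. \<Sum>k\<le>l. e k * ((x $ first_index TYPE('n))^2)^k * rho x ^ (l-k))"
    by (intro poly_fun_sum poly_fun_mult poly_fun_pow poly_fun_coord poly_fun_const rho_poly_fun) auto
  then show ?thesis unfolding He_def[abs_def] .
qed

lemma lap_He_cf:
  fixes x :: "real^'n::finite"
  assumes "l = Suc l'"
  shows "laplacian (He e l) x = (\<Sum>k\<le>l'. cf e (real CARD('n)) l k * ((x $ first_index TYPE('n))^2)^k * rho x^(l'-k))"
  unfolding lap_He assms by (rule lap_reindex)

lemma He_harmonic:
  assumes "CARD('n::finite) \<ge> 2" "l \<ge> 1"
  shows "harmonic (He (EE (real CARD('n)) l) l :: real^'n \<Rightarrow> real)"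
proof -
  obtain l' where l: "l = Suc l'" using assms(2) by (cases l) auto
  have d: "real CARD('n) \<ge> 2" using assms(1) by simp
  show ?thesis unfolding harmonic_def
  proof
    fix x :: "real^'n"
    show "laplacian (He (EE (real CARD('n)) l) l) x = 0"
      unfolding lap_He_cf[OF l] using cf_EE[OF d] l by simp
  qed
qed

lemma He_sphere:
  fixes \<sigma> :: "real^'n::finite"
  assumes "norm \<sigma> = 1"
  shows "He e l \<sigma> = poly (Bp e l) (\<sigma> $ first_index TYPE('n))"
proof -
  have "rho \<sigma> = 1 - (\<sigma> $ first_index TYPE('n))^2" using normsq[of \<sigma>] assms by simp
  then show ?thesis unfolding He_def poly_Bp by simp
qed

lemma existence:
  assumes "CARD('n::finite) \<ge> 2" "l \<ge> 1"
  shows "poly (Bp (EE (real CARD('n)) l) l) 1 = 1 \<and>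
     (\<exists>H :: real^'n \<Rightarrow> real. poly_fun H \<and> homogeneous_of_degree (2*l) H \<and> harmonic H \<and>
        (\<forall>\<sigma>. norm \<sigma> = 1 \<longrightarrow> H \<sigma> = poly (Bp (EE (real CARD('n)) l) l) (\<sigma> $ first_index TYPE('n))))"
proof
  show "poly (Bp (EE (real CARD('n)) l) l) 1 = 1" by (simp add: Bp_at1)
  show "\<exists>H :: real^'n \<Rightarrow> real. poly_fun H \<and> homogeneous_of_degree (2*l) H \<and> harmonic H \<and>
        (\<forall>\<sigma>. norm \<sigma> = 1 \<longrightarrow> H \<sigma> = poly (Bp (EE (real CARD('n)) l) l) (\<sigma> $ first_index TYPE('n)))"
    using He_poly_fun He_homog He_harmonic[OF assms] He_sphere[where 'n='n] by blast
qed


lemma deg_bound: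
  fixes h :: "real poly"
  assumes bnd: "\<And>u. \<bar>poly h u\<bar> \<le> M * (1 + u^2)^l"
  shows "degree h \<le> 2*l"
proof (rule ccontr)
  assume "\<not> degree h \<le> 2*l"
  then have m: "degree h > 2*l" by simp
  then have h0: "h \<noteq> 0" by auto
  have "\<bar>poly h 0\<bar> \<le> M" using bnd[of 0] by simp
  then have M0: "M \<ge> 0" by (meson abs_ge_zero order_trans)
  define r where "r = reflect_poly h"
  define m where "m = degree h"
  have b: "\<bar>poly r t\<bar> \<le> M * \<bar>t\<bar>^(m - 2*l) * (t^2 + 1)^l" if t: "t \<noteq> 0" for t
  proof -
    have "\<bar>poly r t\<bar> = \<bar>t\<bar>^m * \<bar>poly h (inverse t)\<bar>"
      unfolding r_def m_def using t by (simp add: poly_reflect_poly_nz abs_mult power_abs)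
    also have "\<dots> \<le> \<bar>t\<bar>^m * (M * (1 + (inverse t)^2)^l)"
      by (intro mult_left_mono bnd) auto
    also have "\<bar>t\<bar>^m = \<bar>t\<bar>^(m - 2*l) * (t^2)^l"
    proof -
      have "(t^2)^l = \<bar>t\<bar>^(2*l)" by (simp add: power_mult)
      moreover have "\<bar>t\<bar>^(m - 2*l) * \<bar>t\<bar>^(2*l) = \<bar>t\<bar>^m"
        using m unfolding m_def by (simp add: power_add[symmetric])
      ultimately show ?thesis by simp
    qed
    also have "\<bar>t\<bar>^(m - 2*l) * (t^2)^l * (M * (1 + (inverse t)^2)^l) = M * \<bar>t\<bar>^(m - 2*l) * (t^2 * (1 + (inverse t)^2))^l"
      by (simp add: power_mult_distrib)
    also have "t^2 * (1 + (inverse t)^2) = t^2 + 1"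
      using t by (simp add: field_simps)
    finally show ?thesis .
  qed
  have lim1: "((\<lambda>t. \<bar>poly r t\<bar>) \<longlongrightarrow> \<bar>poly r 0\<bar>) (at 0)"
    by (intro tendsto_intros)
  have "((\<lambda>t. M * \<bar>t\<bar>^(m - 2*l) * (t^2 + 1)^l) \<longlongrightarrow> M * \<bar>0\<bar>^(m - 2*l) * (0^2 + 1)^l) (at (0::real))"
    by (intro tendsto_intros)
  moreover have "(0::real)^(m - 2*l) = 0" using m unfolding m_def by simp
  ultimately have lim2: "((\<lambda>t. M * \<bar>t\<bar>^(m - 2*l) * (t^2 + 1)^l) \<longlongrightarrow> 0) (at (0::real))"
    by simp
  have ev: "\<forall>\<^sub>F t in at 0. \<bar>poly r t\<bar> \<le> M * \<bar>t\<bar>^(m - 2*l) * (t^2 + 1)^l"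
    using b by (simp add: eventually_at_filter)
  have "\<bar>poly r 0\<bar> \<le> 0"
    by (rule tendsto_le[OF _ lim2 lim1 ev]) simp
  then have "lead_coeff h = 0" unfolding r_def by simp
  then show False using h0 by simp
qed

lemma even_sum: fixes l :: nat and f :: "nat \<Rightarrow> real" shows "(\<Sum>i\<le>2*l. if even i then f i else 0) = (\<Sum>k\<le>l. f (2*k))"
proof -
  have "(\<Sum>i\<le>2*l. if even i then f i else 0) = sum f {i\<in>{..2*l}. even i}"
    by (rule sum.inter_filter[symmetric]) simp
  also have "{i\<in>{..2*l}. even i} = (\<lambda>k. 2*k) ` {..l}"
    by (auto elim!: evenE)
  also have "sum f ((\<lambda>k. 2*k) ` {..l}) = (\<Sum>k\<le>l. f (2*k))"
    by (subst sum.reindex) (auto simp: inj_on_def)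
  finally show ?thesis .
qed

lemma even_poly:
  fixes h :: "real poly"
  assumes "degree h \<le> 2*l" "\<And>u. poly h (-u) = poly h u"
  shows "poly h u = (\<Sum>k\<le>l. coeff h (2*k) * (u^2)^k)"
proof -
  have ex: "poly h v = (\<Sum>i\<le>2*l. coeff h i * v^i)" for v
  proof -
    have "poly h v = poly (\<Sum>i\<le>2*l. monom (coeff h i) i) v"
      using poly_as_sum_of_monoms'[OF assms(1)] by simp
    also have "\<dots> = (\<Sum>i\<le>2*l. coeff h i * v^i)" by (simp add: poly_sum poly_monom)
    finally show ?thesis .
  qed
  have "2 * poly h u = poly h u + poly h (-u)" using assms(2) by simp
  also have "\<dots> = (\<Sum>i\<le>2*l. coeff h i * (u^i + (-u)^i))"
    unfolding ex by (simp add: sum.distrib[symmetric] algebra_simps)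
  also have "\<dots> = (\<Sum>i\<le>2*l. if even i then 2 * (coeff h i * u^i) else 0)"
    by (intro sum.cong refl) auto
  also have "\<dots> = (\<Sum>k\<le>l. 2 * (coeff h (2*k) * u^(2*k)))"
    by (rule even_sum)
  finally show ?thesis by (simp add: sum_distrib_left[symmetric] power_mult)
qed


lemma rho_w:
  fixes j :: "'n::finite"
  assumes "j \<noteq> first_index TYPE('n)"
  shows "rho (a *\<^sub>R axis j 1 + u *\<^sub>R axis (first_index TYPE('n)) 1 :: real^'n) = a^2"
    and "(a *\<^sub>R axis j 1 + u *\<^sub>R axis (first_index TYPE('n)) 1 :: real^'n) $ first_index TYPE('n) = u"
proof -
  have "rho (a *\<^sub>R axis j 1 + u *\<^sub>R axis (first_index TYPE('n)) 1 :: real^'n)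
      = (\<Sum>i\<in>UNIV - {first_index TYPE('n)}. if i = j then a^2 else 0)"
    unfolding rho_def by (intro sum.cong refl) (auto simp: axis_def)
  also have "\<dots> = a^2" using assms by (simp add: sum.delta)
  finally show "rho (a *\<^sub>R axis j 1 + u *\<^sub>R axis (first_index TYPE('n)) 1 :: real^'n) = a^2" .
  show "(a *\<^sub>R axis j 1 + u *\<^sub>R axis (first_index TYPE('n)) 1 :: real^'n) $ first_index TYPE('n) = u"
    using assms by (simp add: axis_def)
qed

lemma poly_bounded_Icc:
  fixes p :: "real poly"
  obtains M where "\<And>w. -1 \<le> w \<Longrightarrow> w \<le> 1 \<Longrightarrow> \<bar>poly p w\<bar> \<le> M"
proof -
  have "compact (poly p ` {-1..1})"
    by (intro compact_continuous_image continuous_intros) auto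
  then have "bounded (poly p ` {-1..1})" by (rule compact_imp_bounded)
  then obtain M where "\<forall>x\<in>poly p ` {-1..1}. norm x \<le> M" unfolding bounded_iff by blast
  then have "\<And>w. -1 \<le> w \<Longrightarrow> w \<le> 1 \<Longrightarrow> \<bar>poly p w\<bar> \<le> M" by auto
  then show ?thesis by (rule that)
qed

lemma uniqueness:
  fixes H :: "real^'n::finite \<Rightarrow> real" and p :: "real poly"
  assumes card: "CARD('n) \<ge> 2" and l1: "l \<ge> 1"
    and p1: "poly p 1 = 1" and pf: "poly_fun H" and hom: "homogeneous_of_degree (2*l) H"
    and harm: "harmonic H" and sph: "\<forall>\<sigma>. norm \<sigma> = 1 \<longrightarrow> H \<sigma> = poly p (\<sigma> $ first_index TYPE('n))"
  shows "p = Bp (EE (real CARD('n)) l) l"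
proof -
  define i1 where "i1 = first_index TYPE('n)"
  define d where "d = real CARD('n)"
  obtain j where j: "j \<noteq> i1"
  proof -
    have "card (UNIV - {i1}) \<ge> 1" using card by (simp add: card_Diff_singleton)
    then have "UNIV - {i1} \<noteq> {}" by (metis card.empty not_one_le_zero)
    then show ?thesis using that by auto
  qed
  have radial: "H y = norm y ^ (2*l) * poly p (y $ i1 / norm y)" if y0: "y \<noteq> 0" for y
  proof -
    let ?s = "(1 / norm y) *\<^sub>R y"
    have ns: "norm ?s = 1" using y0 by simp
    have "H y = H (norm y *\<^sub>R ?s)" using y0 by simp
    also have "\<dots> = norm y ^ (2*l) * H ?s" using hom unfolding homogeneous_of_degree_def by blast
    also have "H ?s = poly p (?s $ i1)" using sph ns unfolding i1_def by blast
    finally show ?thesis by (simp add: divide_inverse mult.commute)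
  qed
  have pt: "H y = (1 + u^2)^l * poly p (u / sqrt (1 + u^2))" if yu: "y $ i1 = u" "rho y = 1" for y u
  proof -
    have n2: "(norm y)^2 = 1 + u^2" using normsq[of y] yu unfolding i1_def by simp
    have ny: "norm y = sqrt (1 + u^2)" using real_sqrt_unique[OF n2 norm_ge_zero] by simp
    have "1 + u^2 > 0" by (simp add: add_pos_nonneg)
    then have "y \<noteq> 0" using n2 by auto
    then have "H y = norm y ^ (2*l) * poly p (y $ i1 / norm y)" by (rule radial)
    also have "norm y ^ (2*l) = (1+u^2)^l" using n2 by (simp add: power_mult)
    finally show ?thesis using yu ny by simp
  qed
  obtain h where h: "\<forall>u. H (axis j 1 + u *\<^sub>R axis i1 1) = poly h u"
    using poly_fun_line[OF pf] by blast
  have wpt: "H (a *\<^sub>R axis j 1 + u *\<^sub>R axis i1 1) = (1 + u^2)^l * poly p (u / sqrt (1 + u^2))"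
    if a2: "a^2 = 1" for a u
  proof (rule pt)
    show "(a *\<^sub>R axis j 1 + u *\<^sub>R axis i1 1) $ i1 = u" using rho_w(2)[of j a u] j unfolding i1_def by simp
    show "rho (a *\<^sub>R axis j 1 + u *\<^sub>R axis i1 1) = 1" using rho_w(1)[of j a u] j a2 unfolding i1_def by simp
  qed
  have hp: "poly h u = (1 + u^2)^l * poly p (u / sqrt (1 + u^2))" for u
  proof -
    have "H (1 *\<^sub>R axis j 1 + u *\<^sub>R axis i1 1) = (1 + u^2)^l * poly p (u / sqrt (1 + u^2))"
      by (rule wpt) simp
    then have A: "H (axis j 1 + u *\<^sub>R axis i1 1) = (1 + u^2)^l * poly p (u / sqrt (1 + u^2))"
      by (simp only: scaleR_one)
    have B: "H (axis j 1 + u *\<^sub>R axis i1 1) = poly h u" by (rule h[rule_format])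
    show ?thesis using trans[OF sym[OF B] A] .
  qed
  have heven: "poly h (-u) = poly h u" for u
  proof -
    have "H ((-1) *\<^sub>R axis j 1 + u *\<^sub>R axis i1 1) = H ((-1) *\<^sub>R (axis j 1 + (-u) *\<^sub>R axis i1 1))"
      by (simp add: algebra_simps)
    also have "\<dots> = (-1)^(2*l) * H (axis j 1 + (-u) *\<^sub>R axis i1 1)"
      using hom unfolding homogeneous_of_degree_def by blast
    moreover have "H (axis j 1 + (-u) *\<^sub>R axis i1 1) = poly h (-u)" by (rule h[rule_format])
    ultimately have "H ((-1) *\<^sub>R axis j 1 + u *\<^sub>R axis i1 1) = poly h (-u)" by simp
    moreover have "H ((-1) *\<^sub>R axis j 1 + u *\<^sub>R axis i1 1) = poly h u"
    proof -
      have "H ((-1) *\<^sub>R axis j 1 + u *\<^sub>R axis i1 1) = (1 + u^2)^l * poly p (u / sqrt (1 + u^2))"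
        by (rule wpt) simp
      then show ?thesis using hp[of u] by (simp only:)
    qed
    ultimately show ?thesis by simp
  qed
  obtain M where M: "\<And>w. -1 \<le> w \<Longrightarrow> w \<le> 1 \<Longrightarrow> \<bar>poly p w\<bar> \<le> M"
    using poly_bounded_Icc by blast
  have hb: "\<bar>poly h u\<bar> \<le> M * (1 + u^2)^l" for u
  proof -
    define v where "v = u / sqrt (1 + u^2)"
    have pos: "1 + u^2 > 0" by (simp add: add_pos_nonneg)
    have sq: "sqrt (1 + u^2) > 0" using pos by simp
    have "sqrt (u^2) \<le> sqrt (1 + u^2)" by (rule real_sqrt_le_mono) simp
    then have "\<bar>u\<bar> \<le> sqrt (1 + u^2)" by (simp only: real_sqrt_abs)
    then have "\<bar>u\<bar> / sqrt (1 + u^2) \<le> 1" using sq by (simp only: divide_le_eq_1_pos)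
    then have "\<bar>v\<bar> \<le> 1" unfolding v_def using abs_div_pos[OF sq, of u] by (simp only:)
    then have "-1 \<le> v" "v \<le> 1" by (simp_all only: abs_le_iff) linarith+
    then have pv: "\<bar>poly p v\<bar> \<le> M" by (rule M)
    have "\<bar>poly h u\<bar> = (1 + u^2)^l * \<bar>poly p v\<bar>"
      unfolding hp v_def abs_mult using pos by simp
    also have "\<dots> \<le> (1 + u^2)^l * M" using pv pos by (intro mult_left_mono) simp_all
    finally show ?thesis by (simp only: mult.commute)
  qed
  have deg: "degree h \<le> 2*l" by (rule deg_bound[OF hb])
  define e where "e k = coeff h (2*k)" for k
  have hsum: "poly h u = (\<Sum>k\<le>l. e k * (u^2)^k)" for u
    unfolding e_def by (rule even_poly[OF deg heven])
  have pw: "poly p w = poly (Bp e l) w" if w: "-1 < w" "w < 1" for w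
  proof -
    define c where "c = 1 - w^2"
    have c0: "c > 0" using w unfolding c_def by (simp add: abs_square_less_1)
    define u where "u = w / sqrt c"
    have u2: "u^2 = w^2 / c" unfolding u_def using c0 by (simp add: power_divide)
    have 1: "1 + u^2 = 1 / c" unfolding u2 c_def using c0 c_def by (simp add: field_simps)
    have s1: "sqrt (1 + u^2) = 1 / sqrt c" using 1 by (simp add: real_sqrt_divide)
    have 2: "u / sqrt (1 + u^2) = w" unfolding s1 unfolding u_def using c0 by simp
    have "poly h u = (1 / c)^l * poly p w" using hp[of u] unfolding 2 unfolding 1 .
    then have "poly p w = c^l * poly h u" using c0 by (simp add: field_simps power_divide)
    also have "\<dots> = (\<Sum>k\<le>l. e k * (c^l * (w^2 / c)^k))"
      unfolding hsum u2 by (simp add: sum_distrib_left algebra_simps)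
    also have "\<dots> = (\<Sum>k\<le>l. e k * (w^2)^k * (1 - w^2)^(l-k))"
    proof (intro sum.cong refl)
      fix k assume "k \<in> {..l}"
      then have "c^l = c^k * c^(l-k)" by (simp add: power_add[symmetric])
      then show "e k * (c^l * (w^2 / c)^k) = e k * (w^2)^k * (1 - w^2)^(l-k)"
        using c0 unfolding c_def[symmetric] by (simp add: power_divide field_simps)
    qed
    finally show ?thesis unfolding poly_Bp .
  qed
  have pB: "p = Bp e l"
  proof (rule ccontr)
    assume "p \<noteq> Bp e l"
    then have "p - Bp e l \<noteq> 0" by simp
    then have "finite {x. poly (p - Bp e l) x = 0}" by (rule poly_roots_finite)
    moreover have "{-1<..<1} \<subseteq> {x. poly (p - Bp e l) x = 0}" using pw by auto
    ultimately have "finite {-1<..<(1::real)}" by (rule finite_subset[rotated])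
    then show False using infinite_Ioo[of "-1" "1::real"] by simp
  qed
  have Hfun: "H = He e l"
  proof
    fix x :: "real^'n"
    show "H x = He e l x"
    proof (cases "x = 0")
      case True
      have "H x = H (0 *\<^sub>R x)" using True by simp
      also have "\<dots> = 0^(2*l) * H x" using hom unfolding homogeneous_of_degree_def by blast
      also have "\<dots> = 0" using l1 by simp
      finally have "H x = 0" .
      moreover have "He e l x = 0" unfolding He_def True rho_def
        by (intro sum.neutral ballI) (use l1 in \<open>auto simp: power_0_left\<close>)
      ultimately show ?thesis by simp
    next
      case False
      define S where "S = (x $ i1)^2 + rho x"
      have nS: "(norm x)^2 = S" unfolding S_def i1_def by (rule normsq)
      have S0: "S > 0" using False nS by (metis zero_less_norm_iff zero_less_power)
      have "H x = norm x ^ (2*l) * poly (Bp e l) (x $ i1 / norm x)" using radial[OF False] pB by simp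
      also have "\<dots> = (\<Sum>k\<le>l. S^l * (e k * ((x $ i1)^2 / S)^k * (rho x / S)^(l-k)))"
      proof -
        have "norm x ^ (2*l) = S^l" using nS by (simp add: power_mult)
        moreover have "(x $ i1 / norm x)^2 = (x $ i1)^2 / S" using nS by (simp add: power_divide)
        moreover have "1 - (x $ i1)^2 / S = rho x / S" using S0 unfolding S_def by (simp add: field_simps)
        ultimately show ?thesis unfolding poly_Bp by (simp add: sum_distrib_left)
      qed
      also have "\<dots> = He e l x"
        unfolding He_def i1_def[symmetric]
      proof (intro sum.cong refl)
        fix k assume "k \<in> {..l}"
        then have "S^l = S^k * S^(l-k)" by (simp add: power_add[symmetric])
        then show "S^l * (e k * ((x $ i1)^2 / S)^k * (rho x / S)^(l-k)) = e k * ((x $ i1)^2)^k * rho x ^ (l-k)"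
          using S0 by (simp add: power_divide field_simps)
      qed
      finally show ?thesis .
    qed
  qed
  obtain l' where l': "l = Suc l'" using l1 by (cases l) auto
  have lapz: "(\<Sum>k\<le>l'. cf e d l k * (u^2)^k) = 0" for u
  proof -
    have "laplacian (He e l) (axis j 1 + u *\<^sub>R axis i1 1) = 0" using harm Hfun unfolding harmonic_def by simp
    then show ?thesis
      unfolding lap_He_cf[OF l'] using rho_w[of j 1 u] j unfolding i1_def d_def by simp
  qed
  define Q where "Q = (\<Sum>k\<le>l'. monom (cf e d l k) (2*k))"
  have "poly Q u = 0" for u
    unfolding Q_def using lapz[of u] by (simp add: poly_sum poly_monom power_mult)
  then have Q0: "Q = 0" using poly_all_0_iff_0 by blast
  have cf0: "cf e d l k = 0" if "k < l" for k
  proof -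
    have "coeff Q (2*k) = (\<Sum>k'\<le>l'. if k' = k then cf e d l k' else 0)"
      unfolding Q_def coeff_sum by (intro sum.cong refl) simp
    also have "\<dots> = cf e d l k" using that l' by simp
    finally show ?thesis using Q0 by simp
  qed
  have el: "e l = 1" using p1 pB Bp_at1 by simp
  have d2: "d \<ge> 2" using card unfolding d_def by simp
  have "e k = EE d l k" if "k \<le> l" for k
    by (rule cf_zero_unique[OF d2 cf0 el that])
  then show ?thesis unfolding pB d_def[symmetric] Bp_def by (intro sum.cong refl) auto
qed


lemma term_ode:
  fixes y d :: real and k m :: nat
  shows "2*y*(1-y) * (real k * (real (k-1) * y^(k-1-1)) * (1-y)^m - 2 * (real k * y^(k-1)) * (real m * (1-y)^(m-1))
      + y^k * (real m * (real (m-1) * (1-y)^(m-1-1))))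
    + (1 - d*y) * (real k * y^(k-1) * (1-y)^m - y^k * (real m * (1-y)^(m-1)))
    + real (k+m) * (2*real (k+m) + d - 2) * (y^k * (1-y)^m)
  = real k * (2*real k - 1) * y^(k-1) * (1-y)^m + real m * (2*real m + d - 3) * y^k * (1-y)^(m-1)"
proof -
  have "k = 0 \<or> k = 1 \<or> (\<exists>k'. k = Suc (Suc k'))" by presburger
  moreover have "m = 0 \<or> m = 1 \<or> (\<exists>m'. m = Suc (Suc m'))" by presburger
  ultimately show ?thesis
    by (elim disjE exE) (simp_all add: algebra_simps power_Suc)
qed

definition Rp :: "(nat \<Rightarrow> real) \<Rightarrow> nat \<Rightarrow> real poly" where
  "Rp e l = (\<Sum>k\<le>l. smult (e k) ([:0,1:]^k * [:1,-1:]^(l-k)))"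

lemma poly_Rp: "poly (Rp e l) y = (\<Sum>k\<le>l. e k * (y^k * (1-y)^(l-k)))"
  by (simp add: Rp_def poly_sum poly_power)

lemma Bp_Rp: "poly (Bp e l) x = poly (Rp e l) (x^2)"
  unfolding poly_Bp poly_Rp by (simp add: mult.assoc)

definition G1 :: "nat \<Rightarrow> nat \<Rightarrow> real \<Rightarrow> real" where
  "G1 l k y = real k * y^(k-1) * (1-y)^(l-k) - y^k * (real (l-k) * (1-y)^(l-k-1))"

definition G2 :: "nat \<Rightarrow> nat \<Rightarrow> real \<Rightarrow> real" where
  "G2 l k y = real k * (real (k-1) * y^(k-1-1)) * (1-y)^(l-k) - 2 * (real k * y^(k-1)) * (real (l-k) * (1-y)^(l-k-1))
      + y^k * (real (l-k) * (real (l-k-1) * (1-y)^(l-k-1-1)))"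

lemma d1_R: "((\<lambda>y. poly (Rp e l) y) has_real_derivative (\<Sum>k\<le>l. e k * G1 l k y)) (at y)"
  unfolding poly_Rp G1_def by (auto intro!: derivative_eq_intros sum.cong simp: algebra_simps)

lemma d2_R: "((\<lambda>y. (\<Sum>k\<le>l. e k * G1 l k y)) has_real_derivative (\<Sum>k\<le>l. e k * G2 l k y)) (at y)"
  unfolding G1_def G2_def by (auto intro!: derivative_eq_intros sum.cong simp: algebra_simps)

lemma R1_eq: "poly (pderiv (Rp e l)) y = (\<Sum>k\<le>l. e k * G1 l k y)"
  by (rule DERIV_unique[OF poly_DERIV d1_R])

lemma R2_eq: "poly (pderiv (pderiv (Rp e l))) y = (\<Sum>k\<le>l. e k * G2 l k y)"
proof -
  have "((\<lambda>y. poly (pderiv (Rp e l)) y) has_real_derivative poly (pderiv (pderiv (Rp e l))) y) (at y)"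
    by (rule poly_DERIV)
  then have "((\<lambda>y. (\<Sum>k\<le>l. e k * G1 l k y)) has_real_derivative poly (pderiv (pderiv (Rp e l))) y) (at y)"
    unfolding R1_eq .
  then show ?thesis by (rule DERIV_unique[OF _ d2_R])
qed

lemma nat_cast_aux: "real (2*k*(2*k-1)) = 2 * (real k * (2*real k - 1))"
  by (cases k) (auto simp: algebra_simps)

lemma R_ode:
  fixes d y :: real
  assumes d: "d \<ge> 2" and l: "l = Suc l'"
  shows "2*y*(1-y) * poly (pderiv (pderiv (Rp (EE d l) l))) y + (1 - d*y) * poly (pderiv (Rp (EE d l) l)) y
    + real l * (2*real l + d - 2) * poly (Rp (EE d l) l) y = 0"
proof -
  define e where "e = EE d l"
  have "2*y*(1-y) * poly (pderiv (pderiv (Rp e l))) y + (1 - d*y) * poly (pderiv (Rp e l)) y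
    + real l * (2*real l + d - 2) * poly (Rp e l) y
    = (\<Sum>k\<le>l. e k * (2*y*(1-y) * G2 l k y + (1 - d*y) * G1 l k y + real l * (2*real l + d - 2) * (y^k * (1-y)^(l-k))))"
    unfolding R1_eq R2_eq poly_Rp sum_distrib_left sum.distrib[symmetric] by (intro sum.cong refl) (simp add: algebra_simps)
  also have "\<dots> = (\<Sum>k\<le>l. e k * (real k * (2*real k - 1) * y^(k-1) * (1-y)^(l-k) + real (l-k) * (2*real (l-k) + d - 3) * y^k * (1-y)^(l-k-1)))"
  proof (intro sum.cong refl)
    fix k assume "k \<in> {..l}"
    then have "k + (l - k) = l" by simp
    then show "e k * (2*y*(1-y) * G2 l k y + (1 - d*y) * G1 l k y + real l * (2*real l + d - 2) * (y^k * (1-y)^(l-k)))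
      = e k * (real k * (2*real k - 1) * y^(k-1) * (1-y)^(l-k) + real (l-k) * (2*real (l-k) + d - 3) * y^k * (1-y)^(l-k-1))"
      using term_ode[of y k "l-k" d] unfolding G1_def G2_def by simp
  qed
  also have "\<dots> = (1/2) * ((\<Sum>k\<le>l. e k * (2*k*(2*k-1)) * y^(k-1) * (1-y)^(l-k))
     + (\<Sum>k\<le>l. e k * y^k * (2 * real (l-k) * (2 * real (l-k) + d - 3)) * (1-y)^(l-k-1)))"
    unfolding sum_distrib_left sum.distrib[symmetric] nat_cast_aux by (intro sum.cong refl) (simp add: algebra_simps)
  also have "\<dots> = (1/2) * (\<Sum>k\<le>l'. cf e d (Suc l') k * y^k * (1-y)^(l'-k))"
    unfolding l by (simp only: lap_reindex)
  also have "\<dots> = 0"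
    using cf_EE[OF d] unfolding e_def l by simp
  finally show ?thesis unfolding e_def .
qed


lemma legendre_poly_eq:
  assumes "CARD('n::finite) \<ge> 2" "l \<ge> 1"
  shows "legendre_poly TYPE('n) (2*l) = Bp (EE (real CARD('n)) l) l"
  unfolding legendre_poly_def
proof (rule the_equality)
  show "poly (Bp (EE (real CARD('n)) l) l) 1 = 1 \<and>
     (\<exists>H :: real^'n \<Rightarrow> real. poly_fun H \<and> homogeneous_of_degree (2*l) H \<and> harmonic H \<and>
        (\<forall>\<sigma>. norm \<sigma> = 1 \<longrightarrow> H \<sigma> = poly (Bp (EE (real CARD('n)) l) l) (\<sigma> $ first_index TYPE('n))))"
    by (rule existence[OF assms])
next
  fix p assume "poly p 1 = 1 \<and>
     (\<exists>H :: real^'n \<Rightarrow> real. poly_fun H \<and> homogeneous_of_degree (2*l) H \<and> harmonic H \<and>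
        (\<forall>\<sigma>. norm \<sigma> = 1 \<longrightarrow> H \<sigma> = poly p (\<sigma> $ first_index TYPE('n))))"
  then show "p = Bp (EE (real CARD('n)) l) l"
    using uniqueness[OF assms] by blast
qed

lemma EE0_bound:
  fixes d :: real
  assumes d: "d \<ge> 2" and l: "l \<ge> 1"
  shows "\<bar>EE d l 0\<bar> \<le> 1 / (d - 1)"
proof -
  define num where "num j = real (Suc j) * (2 * real j + 1)" for j
  define den where "den j = real (l-j) * (2 * real (l-j) + d - 3)" for j
  define q where "q j = (2 * real j + 1) / (2 * real j + d - 1)" for j
  have "\<bar>EE d l 0\<bar> = (\<Prod>j\<in>{0..<l}. \<bar>fac d l j\<bar>)" unfolding EE_def by (rule abs_prod)
  also have "\<dots> = (\<Prod>j\<in>{0..<l}. num j / den j)"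
  proof (intro prod.cong refl)
    fix j assume "j \<in> {0..<l}"
    then have "den j > 0" unfolding den_def using denom_pos[OF d, of j l] by simp
    moreover have "num j \<ge> 0" unfolding num_def by simp
    ultimately show "\<bar>fac d l j\<bar> = num j / den j" unfolding fac_def num_def[symmetric] den_def[symmetric]
      by (simp add: abs_minus_cancel abs_div_pos)
  qed
  also have "\<dots> = prod num {0..<l} / prod den {0..<l}" by (rule prod_dividef)
  also have "prod den {0..<l} = (\<Prod>i\<in>{0..<l}. den (l + 0 - Suc i))" by (rule prod.atLeastLessThan_rev)
  also have "\<dots> = (\<Prod>i\<in>{0..<l}. real (Suc i) * (2 * real i + d - 1))"
  proof (intro prod.cong refl)
    fix i assume "i \<in> {0..<l}"
    then have "l - (l + 0 - Suc i) = Suc i" by auto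
    then show "den (l + 0 - Suc i) = real (Suc i) * (2 * real i + d - 1)" unfolding den_def by simp
  qed
  also have "prod num {0..<l} / (\<Prod>i\<in>{0..<l}. real (Suc i) * (2 * real i + d - 1)) = (\<Prod>j\<in>{0..<l}. q j)"
    unfolding prod_dividef[symmetric] q_def num_def by (intro prod.cong refl) simp
  also have "\<dots> = q 0 * (\<Prod>j\<in>{Suc 0..<l}. q j)" using l by (simp add: prod.atLeast_Suc_lessThan)
  also have "\<dots> \<le> q 0 * 1"
  proof (intro mult_left_mono prod_le_1)
    fix j assume "j \<in> {Suc 0..<l}"
    show "0 \<le> q j \<and> q j \<le> 1" unfolding q_def using d by auto
  next
    show "0 \<le> q 0" unfolding q_def using d by simp
  qed
  also have "q 0 * 1 = 1 / (d - 1)" unfolding q_def by simp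
  finally show ?thesis .
qed

lemma R_at1: "poly (Rp e l) 1 = e l"
proof -
  have "poly (Rp e l) 1 = (\<Sum>k\<le>l. if k = l then e k else 0)"
    unfolding poly_Rp by (intro sum.cong refl) auto
  then show ?thesis by simp
qed

lemma R_at0: "poly (Rp e l) 0 = e 0"
proof -
  have "poly (Rp e l) 0 = (\<Sum>k\<le>l. if k = 0 then e k else 0)"
    unfolding poly_Rp by (intro sum.cong refl) auto
  then show ?thesis by simp
qed

lemma S_ode:
  fixes d y :: real
  assumes d: "d \<ge> 2" and l: "l = Suc l'"
  defines "R \<equiv> Rp (EE d l) l"
  shows "2*y*(1-y) * poly (pderiv (pderiv (pderiv R))) y + (3 - (d+4)*y) * poly (pderiv (pderiv R)) y
    + (real l * (2*real l + d - 2) - d) * poly (pderiv R) y = 0"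
proof -
  define \<kappa> where "\<kappa> = real l * (2*real l + d - 2)"
  define T where "T = smult 2 ([:0,1,-1:] * pderiv (pderiv R)) + [:1,-d:] * pderiv R + smult \<kappa> R"
  have "poly T z = 0" for z
  proof -
    have "poly T z = 2*z*(1-z) * poly (pderiv (pderiv R)) z + (1 - d*z) * poly (pderiv R) z + \<kappa> * poly R z"
      unfolding T_def by (simp add: algebra_simps)
    then show ?thesis using R_ode[OF d l, of z] unfolding R_def \<kappa>_def by simp
  qed
  then have "T = 0" using poly_all_0_iff_0 by blast
  then have "poly (pderiv T) y = 0" by simp
  moreover have "poly (pderiv T) y = 2*y*(1-y) * poly (pderiv (pderiv (pderiv R))) y + (3 - (d+4)*y) * poly (pderiv (pderiv R)) y
    + (\<kappa> - d) * poly (pderiv R) y"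
  proof -
    have p1: "pderiv [:0,1,-1:] = [:1,-2::real:]" by (simp add: pderiv_pCons)
    have p2: "pderiv [:1,-d:] = [:-d:]" by (simp add: pderiv_pCons)
    show ?thesis unfolding T_def pderiv_add pderiv_mult pderiv_smult p1 p2 by (simp add: algebra_simps)
  qed
  ultimately show ?thesis unfolding \<kappa>_def by simp
qed

lemma S_ends:
  fixes d :: real
  assumes d: "d \<ge> 2" and l: "l = Suc l'"
  defines "R \<equiv> Rp (EE d l) l"
  shows "poly (pderiv R) 1 = real l * (2*real l + d - 2) / (d - 1)"
    and "poly (pderiv R) 0 = - (real l * (2*real l + d - 2)) * EE d l 0"
proof -
  have "2*1*(1-1) * poly (pderiv (pderiv R)) 1 + (1 - d*1) * poly (pderiv R) 1
    + real l * (2*real l + d - 2) * poly R 1 = 0"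
    using R_ode[OF d l, of 1] unfolding R_def .
  then have "(1 - d) * poly (pderiv R) 1 + real l * (2*real l + d - 2) = 0"
    unfolding R_def R_at1 by simp
  then show "poly (pderiv R) 1 = real l * (2*real l + d - 2) / (d - 1)"
    using d by (simp add: field_simps)
  have "2*0*(1-0) * poly (pderiv (pderiv R)) 0 + (1 - d*0) * poly (pderiv R) 0
    + real l * (2*real l + d - 2) * poly R 0 = 0"
    using R_ode[OF d l, of 0] unfolding R_def .
  then show "poly (pderiv R) 0 = - (real l * (2*real l + d - 2)) * EE d l 0"
    unfolding R_def R_at0 by simp
qed

lemma S_bound:
  fixes d y :: real
  assumes d: "d \<ge> 2" and l: "l = Suc l'" and l2: "l \<ge> 2" and y: "0 \<le> y" "y \<le> 1"
  defines "R \<equiv> Rp (EE d l) l"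
  shows "(poly (pderiv R) y)^2 \<le> (poly (pderiv R) 1)^2"
proof -
  define \<kappa> where "\<kappa> = real l * (2*real l + d - 2)"
  define \<nu> where "\<nu> = \<kappa> - d"
  have \<nu>eq: "\<nu> = (real l - 1) * (2 * real l + d)" unfolding \<nu>_def \<kappa>_def by (simp add: algebra_simps)
  have \<nu>0: "\<nu> > 0" unfolding \<nu>eq using l2 d by (intro mult_pos_pos) auto
  define S where "S z = poly (pderiv R) z" for z
  define S1 where "S1 z = poly (pderiv (pderiv R)) z" for z
  define S2 where "S2 z = poly (pderiv (pderiv (pderiv R))) z" for z
  define E where "E z = (S z)^2 + 2*z*(1-z)*(S1 z)^2/\<nu>" for z
  have dS: "(S has_real_derivative S1 z) (at z)" for z unfolding S_def S1_def by (rule poly_DERIV)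
  have dS1: "(S1 has_real_derivative S2 z) (at z)" for z unfolding S2_def S1_def by (rule poly_DERIV)
  have ode: "2*z*(1-z) * S2 z = - (3 - (d+4)*z) * S1 z - \<nu> * S z" for z
    using S_ode[OF d l, of z] unfolding S_def S1_def S2_def R_def \<nu>_def \<kappa>_def by (simp add: algebra_simps)
  have dE: "(E has_real_derivative ((2*(d+2)*z - 4) * (S1 z)^2 / \<nu>)) (at z)" for z
  proof -
    have "(E has_real_derivative (2 * S z * S1 z + (2*(1-2*z)*(S1 z)^2 + 2 * S1 z * (2*z*(1-z)*S2 z)) / \<nu>)) (at z)"
      unfolding E_def[abs_def]
      using \<nu>0 by (auto intro!: derivative_eq_intros dS dS1 simp: field_simps power2_eq_square)
    also have "2 * S z * S1 z + (2*(1-2*z)*(S1 z)^2 + 2 * S1 z * (2*z*(1-z)*S2 z)) / \<nu>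
        = (2*(d+2)*z - 4) * (S1 z)^2 / \<nu>"
      unfolding ode using \<nu>0 by (simp add: field_simps power2_eq_square)
    finally show ?thesis .
  qed
  have SE: "(S y)^2 \<le> E y" unfolding E_def using y \<nu>0 by (simp add: mult_nonneg_nonneg)
  have S1pos: "S 1 = \<kappa> / (d - 1)" unfolding S_def R_def \<kappa>_def using S_ends(1)[OF d l] .
  have kpos: "\<kappa> > 0" unfolding \<kappa>_def using l2 d by (intro mult_pos_pos) auto
  have S0: "\<bar>S 0\<bar> \<le> S 1"
  proof -
    have "\<bar>S 0\<bar> = \<kappa> * \<bar>EE d l 0\<bar>" unfolding S_def R_def \<kappa>_def S_ends(2)[OF d l]
      using kpos d unfolding \<kappa>_def by (simp add: abs_mult)
    also have "\<dots> \<le> \<kappa> * (1 / (d - 1))" using EE0_bound[OF d] l kpos by (intro mult_left_mono) auto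
    finally show ?thesis unfolding S1pos by simp
  qed
  have E0: "E 0 = (S 0)^2" unfolding E_def by simp
  have E1: "E 1 = (S 1)^2" unfolding E_def by simp
  have "E y \<le> (S 1)^2"
  proof (cases "2*(d+2)*y \<le> 4")
    case True
    have "E y \<le> E 0"
    proof (rule DERIV_nonpos_imp_nonincreasing[OF y(1)])
      fix x assume "0 \<le> x" "x \<le> y"
      then have "2*(d+2)*x - 4 \<le> 0" using True d by (smt (verit) mult_left_mono)
      then have "(2*(d+2)*x - 4) * (S1 x)^2 / \<nu> \<le> 0" using \<nu>0
        by (simp add: divide_nonpos_pos mult_nonpos_nonneg)
      then show "\<exists>D. (E has_real_derivative D) (at x) \<and> D \<le> 0" using dE by blast
    qed
    also have "\<dots> \<le> (S 1)^2" unfolding E0 using power_mono[OF S0 abs_ge_zero, of 2] by simp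
    finally show ?thesis .
  next
    case False
    have "E y \<le> E 1"
    proof (rule DERIV_nonneg_imp_nondecreasing[OF y(2)])
      fix x assume "y \<le> x" "x \<le> 1"
      then have "2*(d+2)*x - 4 \<ge> 0" using False d by (smt (verit) mult_left_mono)
      then have "(2*(d+2)*x - 4) * (S1 x)^2 / \<nu> \<ge> 0" using \<nu>0 by simp
      then show "\<exists>D. (E has_real_derivative D) (at x) \<and> D \<ge> 0" using dE by blast
    qed
    then show ?thesis unfolding E1 .
  qed
  then show ?thesis using SE unfolding S_def by simp
qed

lemma R_ineq:
  fixes d y :: real
  assumes d: "d \<ge> 2" and l: "l = Suc l'" and l2: "l \<ge> 2" and y: "0 \<le> y" "y \<le> 1"
  defines "R \<equiv> Rp (EE d l) l"
  shows "1 - poly R y \<le> poly (pderiv R) 1 * (1 - y)"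
proof -
  define c where "c = poly (pderiv R) 1"
  have c0: "c \<ge> 0" unfolding c_def R_def S_ends(1)[OF d l] using d by simp
  define f where "f z = poly R z - 1 + c * (1 - z)" for z
  have "f 1 \<le> f y"
  proof (rule DERIV_nonpos_imp_nonincreasing[OF y(2)])
    fix x assume x: "y \<le> x" "x \<le> 1"
    have "(poly (pderiv R) x)^2 \<le> c^2" unfolding c_def R_def
      by (rule S_bound[OF d l l2]) (use x y in auto)
    then have "poly (pderiv R) x \<le> c" using c0 by (rule power2_le_imp_le)
    moreover have "(f has_real_derivative (poly (pderiv R) x - c)) (at x)"
      unfolding f_def[abs_def] by (auto intro!: derivative_eq_intros)
    ultimately show "\<exists>D. (f has_real_derivative D) (at x) \<and> D \<le> 0" by auto
  qed
  moreover have "f 1 = 0" unfolding f_def R_def R_at1 by simp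
  ultimately show ?thesis unfolding f_def c_def by simp
qed

theorem main_ineq:
  fixes x :: real and l :: nat
  assumes "CARD('n::finite) \<ge> 2"
    and "-1 \<le> x" and "x \<le> 1"
    and "l \<ge> 1"
  shows "1 - legendre TYPE('n) (2 * l) x
     \<le> sph_eigenvalue CARD('n) (2 * l) / sph_eigenvalue CARD('n) 2 * (1 - legendre TYPE('n) 2 x)"
proof (cases "l = 1")
  case True
  have "sph_eigenvalue CARD('n) 2 > 0" unfolding sph_eigenvalue_def using assms(1) by simp
  then show ?thesis using True by simp
next
  case False
  define d where "d = real CARD('n)"
  have d: "d \<ge> 2" unfolding d_def using assms(1) by simp
  have l2: "l \<ge> 2" using False assms(4) by simp
  obtain l' where l: "l = Suc l'" using assms(4) by (cases l) auto
  define R where "R = Rp (EE d l) l"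
  have P: "legendre TYPE('n) (2 * l) x = poly R (x^2)"
    unfolding legendre_def legendre_poly_eq[OF assms(1) assms(4)] R_def d_def Bp_Rp ..
  have P2: "legendre TYPE('n) 2 x = EE d 1 0 * (1 - x^2) + x^2"
    using legendre_poly_eq[OF assms(1), of 1] unfolding legendre_def d_def by (simp add: poly_Bp)
  have E10: "EE d 1 0 = - 1 / (d - 1)" unfolding EE_def fac_def by simp
  have y: "0 \<le> x^2" "x^2 \<le> 1" using assms(2,3) by (auto simp: abs_square_le_1)
  have "1 - legendre TYPE('n) (2 * l) x \<le> poly (pderiv R) 1 * (1 - x^2)"
    unfolding P R_def by (rule R_ineq[OF d l l2 y])
  also have "poly (pderiv R) 1 * (1 - x^2) = real l * (2*real l + d - 2) / (d - 1) * (1 - x^2)"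
    unfolding R_def S_ends(1)[OF d l] ..
  also have "\<dots> = sph_eigenvalue CARD('n) (2 * l) / sph_eigenvalue CARD('n) 2 * (1 - legendre TYPE('n) 2 x)"
    unfolding P2 E10 sph_eigenvalue_def d_def[symmetric] using d by (simp add: field_simps)
  finally show ?thesis .
qed


theorem proposition7p5:
  fixes x :: real and l :: nat
  assumes "CARD('n::finite) \<ge> 2"
    and "-1 \<le> x" and "x \<le> 1"
    and "l \<ge> 1"
  shows "1 - legendre TYPE('n) (2 * l) x
     \<le> sph_eigenvalue CARD('n) (2 * l) / sph_eigenvalue CARD('n) 2 * (1 - legendre TYPE('n) 2 x)"
  using assms by (rule main_ineq)

end
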